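(* Let $G$ be a finite abelian group which is either cyclic or a direct product of two cyclic groups. Then every normalized $3$-cocycle on $G$ (with values in $\mathbbm{k}^*$) is abelian.
   Context: $\mathbbm{k}$ is algebraically closed of characteristic zero. For a normalized 3-cocycle $\Phi$ on $G$ and $g\in G$, $\widetilde{\Phi}_g(x,y)=\frac{\Phi(g,x,y)\Phi(x,y,g)}{\Phi(x,g,y)}$. The category ${}^{\mathbbm{k}G}_{\mathbbm{k}G}\mathcal{YD}^{\Phi}$ has objects the $G$-graded vector spaces $V=\bigoplus_gV_g$ with operators $e\triangleright-$ ($e\in G$) preserving each $V_g$, $1\triangleright v=v$, and $e\triangleright(f\triangleright v)=\widetilde{\Phi}_g(e,f)(ef)\triangleright v$ for $v\in V_g$; morphisms are graded maps commuting with the actions. $\Phi$ is called abelian if every simple object of ${}^{\mathbbm{k}G}_{\mathbbm{k}G}\mathcal{YD}^{\Phi}$ is $1$-dimensional. *)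

theory Defs
  imports "HOL-Algebra.Elementary_Groups" "HOL-Computational_Algebra.Polynomial"
begin

definition alg_closed_field :: "'k::field itself \<Rightarrow> bool" where
  "alg_closed_field _ \<longleftrightarrow> (\<forall>p::'k poly. degree p \<ge> 1 \<longrightarrow> (\<exists>x. poly p x = 0))"

definition normalized_3cocycle :: "('g, 'm) monoid_scheme \<Rightarrow> ('g \<Rightarrow> 'g \<Rightarrow> 'g \<Rightarrow> 'k::field) \<Rightarrow> bool" where
  "normalized_3cocycle G \<Phi> \<longleftrightarrow>
     (\<forall>x\<in>carrier G. \<forall>y\<in>carrier G. \<forall>z\<in>carrier G. \<Phi> x y z \<noteq> 0) \<and>
     (\<forall>a\<in>carrier G. \<forall>b\<in>carrier G. \<forall>c\<in>carrier G. \<forall>d\<in>carrier G.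
        \<Phi> b c d * \<Phi> a (b \<otimes>\<^bsub>G\<^esub> c) d * \<Phi> a b c
        = \<Phi> (a \<otimes>\<^bsub>G\<^esub> b) c d * \<Phi> a b (c \<otimes>\<^bsub>G\<^esub> d)) \<and>
     (\<forall>x\<in>carrier G. \<forall>y\<in>carrier G.
        \<Phi> \<one>\<^bsub>G\<^esub> x y = 1 \<and> \<Phi> x \<one>\<^bsub>G\<^esub> y = 1 \<and> \<Phi> x y \<one>\<^bsub>G\<^esub> = 1)"

definition Phi_tilde :: "('g \<Rightarrow> 'g \<Rightarrow> 'g \<Rightarrow> 'k::field) \<Rightarrow> 'g \<Rightarrow> 'g \<Rightarrow> 'g \<Rightarrow> 'k" where
  "Phi_tilde \<Phi> g x y = \<Phi> g x y * \<Phi> x y g / \<Phi> x g y"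

text \<open>An object of the category YD^Phi: a k-vector space V (a subspace of the ambient
  k-vector space 'v, with scalar multiplication scale), a G-grading V = (+)_g V_g given by
  grade, and linear operators act e (e in G) preserving each V_g, with act 1 = id and
  act e (act f v) = Phi~_g(e,f) (act (ef) v) for v in V_g.\<close>
definition yd_object ::
  "('g, 'm) monoid_scheme \<Rightarrow> ('g \<Rightarrow> 'g \<Rightarrow> 'g \<Rightarrow> 'k::field) \<Rightarrow> ('k \<Rightarrow> 'v::ab_group_add \<Rightarrow> 'v)
     \<Rightarrow> 'v set \<Rightarrow> ('g \<Rightarrow> 'v set) \<Rightarrow> ('g \<Rightarrow> 'v \<Rightarrow> 'v) \<Rightarrow> bool" where
  "yd_object G \<Phi> scale V grade act \<longleftrightarrow>
     vector_space scale \<and> module.subspace scale V \<and>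
     (\<forall>g\<in>carrier G. module.subspace scale (grade g) \<and> grade g \<subseteq> V) \<and>
     (\<forall>v\<in>V. \<exists>!f. (\<forall>g\<in>carrier G. f g \<in> grade g) \<and> (\<forall>g. g \<notin> carrier G \<longrightarrow> f g = 0)
                 \<and> v = (\<Sum>g\<in>carrier G. f g)) \<and>
     (\<forall>e\<in>carrier G. \<forall>x\<in>V. \<forall>y\<in>V. act e (x + y) = act e x + act e y) \<and>
     (\<forall>e\<in>carrier G. \<forall>c. \<forall>x\<in>V. act e (scale c x) = scale c (act e x)) \<and>
     (\<forall>e\<in>carrier G. \<forall>g\<in>carrier G. \<forall>v\<in>grade g. act e v \<in> grade g) \<and>
     (\<forall>v\<in>V. act \<one>\<^bsub>G\<^esub> v = v) \<and>
     (\<forall>g\<in>carrier G. \<forall>e\<in>carrier G. \<forall>f\<in>carrier G. \<forall>v\<in>grade g.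
        act e (act f v) = scale (Phi_tilde \<Phi> g e f) (act (e \<otimes>\<^bsub>G\<^esub> f) v))"

definition yd_subobject ::
  "('g, 'm) monoid_scheme \<Rightarrow> ('k::field \<Rightarrow> 'v::ab_group_add \<Rightarrow> 'v)
     \<Rightarrow> 'v set \<Rightarrow> ('g \<Rightarrow> 'v set) \<Rightarrow> ('g \<Rightarrow> 'v \<Rightarrow> 'v) \<Rightarrow> 'v set \<Rightarrow> bool" where
  "yd_subobject G scale V grade act W \<longleftrightarrow>
     module.subspace scale W \<and> W \<subseteq> V \<and>
     (\<forall>w\<in>W. \<forall>g\<in>carrier G. \<forall>f. ((\<forall>h\<in>carrier G. f h \<in> grade h) \<and> w = (\<Sum>h\<in>carrier G. f h))
            \<longrightarrow> f g \<in> W) \<and>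
     (\<forall>e\<in>carrier G. \<forall>w\<in>W. act e w \<in> W)"

definition yd_simple ::
  "('g, 'm) monoid_scheme \<Rightarrow> ('g \<Rightarrow> 'g \<Rightarrow> 'g \<Rightarrow> 'k::field) \<Rightarrow> ('k \<Rightarrow> 'v::ab_group_add \<Rightarrow> 'v)
     \<Rightarrow> 'v set \<Rightarrow> ('g \<Rightarrow> 'v set) \<Rightarrow> ('g \<Rightarrow> 'v \<Rightarrow> 'v) \<Rightarrow> bool" where
  "yd_simple G \<Phi> scale V grade act \<longleftrightarrow>
     yd_object G \<Phi> scale V grade act \<and> V \<noteq> {0} \<and>
     (\<forall>W. yd_subobject G scale V grade act W \<longrightarrow> W = {0} \<or> W = V)"

text \<open>Phi is abelian: every simple object of YD^Phi is 1-dimensional. Objects are taken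
  in an arbitrary ambient type 'v (the type variable is universally quantified).\<close>
definition abelian_cocycle ::
  "('g, 'm) monoid_scheme \<Rightarrow> ('g \<Rightarrow> 'g \<Rightarrow> 'g \<Rightarrow> 'k::field) \<Rightarrow> 'v::ab_group_add itself \<Rightarrow> bool" where
  "abelian_cocycle G \<Phi> _ \<longleftrightarrow>
     (\<forall>(scale :: 'k \<Rightarrow> 'v \<Rightarrow> 'v) V grade act. yd_simple G \<Phi> scale V grade act \<longrightarrow>
        (\<exists>v\<in>V. v \<noteq> 0 \<and> V = {scale c v | c. True}))"

end

theory Submission
  imports Defs "HOL-Algebra.FiniteProduct"
begin


lemma frac3:
  fixes n1 n2 n3 n4 n5 n6 d1 d2 d3 d4 d5 d6 :: "'k::field"
  assumes "d1 \<noteq> 0" "d2 \<noteq> 0" "d3 \<noteq> 0" "d4 \<noteq> 0" "d5 \<noteq> 0" "d6 \<noteq> 0"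
  shows "(n1/d1 * (n2/d2) * (n3/d3) = n4/d4*(n5/d5)*(n6/d6)) \<longleftrightarrow> n1*n2*n3*(d4*d5*d6) = n4*n5*n6*(d1*d2*d3)"
  using assms by (simp add: field_simps)

context comm_group
begin

lemma theta_mult:
  fixes \<Phi> :: "'a \<Rightarrow> 'a \<Rightarrow> 'a \<Rightarrow> 'k::field"
  assumes coc: "normalized_3cocycle G \<Phi>"
    and gG[simp]: "g \<in> carrier G" and hG[simp]: "h \<in> carrier G" and xG[simp]: "x \<in> carrier G" and yG[simp]: "y \<in> carrier G"
  shows "Phi_tilde \<Phi> (g \<otimes> h) x y * Phi_tilde \<Phi> g y x * Phi_tilde \<Phi> h y x
       = Phi_tilde \<Phi> (g \<otimes> h) y x * Phi_tilde \<Phi> g x y * Phi_tilde \<Phi> h x y"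
proof -
  have nz: "\<And>a b c. a \<in> carrier G \<Longrightarrow> b \<in> carrier G \<Longrightarrow> c \<in> carrier G \<Longrightarrow> \<Phi> a b c \<noteq> 0"
    using coc unfolding normalized_3cocycle_def by blast
  have cocy: "\<And>a b c d. a \<in> carrier G \<Longrightarrow> b \<in> carrier G \<Longrightarrow> c \<in> carrier G \<Longrightarrow> d \<in> carrier G \<Longrightarrow>
        \<Phi> b c d * \<Phi> a (b \<otimes> c) d * \<Phi> a b c = \<Phi> (a \<otimes> b) c d * \<Phi> a b (c \<otimes> d)"
    using coc unfolding normalized_3cocycle_def by blast
  have cm: "h \<otimes> g = g \<otimes> h" "x \<otimes> g = g \<otimes> x" "y \<otimes> g = g \<otimes> y" "x \<otimes> h = h \<otimes> x"
     "y \<otimes> h = h \<otimes> y" "y \<otimes> x = x \<otimes> y" by (simp_all add: m_comm)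
  have e0: "(\<Phi> y g h * \<Phi> x (g \<otimes> y) h * \<Phi> x y g) = (\<Phi> (x \<otimes> y) g h * \<Phi> x y (g \<otimes> h))"
    using cocy[OF xG yG gG hG] by (simp only: cm)
  have e1: "(\<Phi> g y h * \<Phi> x (g \<otimes> y) h * \<Phi> x g y) = (\<Phi> (g \<otimes> x) y h * \<Phi> x g (h \<otimes> y))"
    using cocy[OF xG gG yG hG] by (simp only: cm)
  have e2: "(\<Phi> g h y * \<Phi> x (g \<otimes> h) y * \<Phi> x g h) = (\<Phi> (g \<otimes> x) h y * \<Phi> x g (h \<otimes> y))"
    using cocy[OF xG gG hG yG] by (simp only: cm)
  have e3: "(\<Phi> x g h * \<Phi> y (g \<otimes> x) h * \<Phi> y x g) = (\<Phi> (x \<otimes> y) g h * \<Phi> y x (g \<otimes> h))"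
    using cocy[OF yG xG gG hG] by (simp only: cm)
  have e4: "(\<Phi> g x h * \<Phi> y (g \<otimes> x) h * \<Phi> y g x) = (\<Phi> (g \<otimes> y) x h * \<Phi> y g (h \<otimes> x))"
    using cocy[OF yG gG xG hG] by (simp only: cm)
  have e5: "(\<Phi> g h x * \<Phi> y (g \<otimes> h) x * \<Phi> y g h) = (\<Phi> (g \<otimes> y) h x * \<Phi> y g (h \<otimes> x))"
    using cocy[OF yG gG hG xG] by (simp only: cm)
  have e6: "(\<Phi> h x y * \<Phi> g (h \<otimes> x) y * \<Phi> g h x) = (\<Phi> (g \<otimes> h) x y * \<Phi> g h (x \<otimes> y))"
    using cocy[OF gG hG xG yG] by (simp only: cm)
  have e7: "(\<Phi> x y h * \<Phi> g (x \<otimes> y) h * \<Phi> g x y) = (\<Phi> (g \<otimes> x) y h * \<Phi> g x (h \<otimes> y))"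
    using cocy[OF gG xG yG hG] by (simp only: cm)
  have e8: "(\<Phi> x h y * \<Phi> g (h \<otimes> x) y * \<Phi> g x h) = (\<Phi> (g \<otimes> x) h y * \<Phi> g x (h \<otimes> y))"
    using cocy[OF gG xG hG yG] by (simp only: cm)
  have e9: "(\<Phi> h y x * \<Phi> g (h \<otimes> y) x * \<Phi> g h y) = (\<Phi> (g \<otimes> h) y x * \<Phi> g h (x \<otimes> y))"
    using cocy[OF gG hG yG xG] by (simp only: cm)
  have e10: "(\<Phi> y x h * \<Phi> g (x \<otimes> y) h * \<Phi> g y x) = (\<Phi> (g \<otimes> y) x h * \<Phi> g y (h \<otimes> x))"
    using cocy[OF gG yG xG hG] by (simp only: cm)
  have e11: "(\<Phi> y h x * \<Phi> g (h \<otimes> y) x * \<Phi> g y h) = (\<Phi> (g \<otimes> y) h x * \<Phi> g y (h \<otimes> x))"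
    using cocy[OF gG yG hG xG] by (simp only: cm)
  have XY: "(\<Phi> y g h * \<Phi> x (g \<otimes> y) h * \<Phi> x y g) * (\<Phi> (g \<otimes> x) y h * \<Phi> x g (h \<otimes> y)) * (\<Phi> g h y * \<Phi> x (g \<otimes> h) y * \<Phi> x g h) * (\<Phi> (x \<otimes> y) g h * \<Phi> y x (g \<otimes> h)) * (\<Phi> g x h * \<Phi> y (g \<otimes> x) h * \<Phi> y g x) * (\<Phi> (g \<otimes> y) h x * \<Phi> y g (h \<otimes> x)) * (\<Phi> h x y * \<Phi> g (h \<otimes> x) y * \<Phi> g h x) * (\<Phi> x y h * \<Phi> g (x \<otimes> y) h * \<Phi> g x y) * (\<Phi> (g \<otimes> x) h y * \<Phi> g x (h \<otimes> y)) * (\<Phi> (g \<otimes> h) y x * \<Phi> g h (x \<otimes> y)) * (\<Phi> (g \<otimes> y) x h * \<Phi> g y (h \<otimes> x)) * (\<Phi> y h x * \<Phi> g (h \<otimes> y) x * \<Phi> g y h) = (\<Phi> (x \<otimes> y) g h * \<Phi> x y (g \<otimes> h)) * (\<Phi> g y h * \<Phi> x (g \<otimes> y) h * \<Phi> x g y) * (\<Phi> (g \<otimes> x) h y * \<Phi> x g (h \<otimes> y)) * (\<Phi> x g h * \<Phi> y (g \<otimes> x) h * \<Phi> y x g) * (\<Phi> (g \<otimes> y) x h * \<Phi> y g (h \<otimes> x)) * (\<Phi> g h x * \<Phi> y (g \<otimes> h) x * \<Phi> y g h) * (\<Phi> (g \<otimes> h) x y * \<Phi> g h (x \<otimes> y))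 * (\<Phi> (g \<otimes> x) y h * \<Phi> g x (h \<otimes> y)) * (\<Phi> x h y * \<Phi> g (h \<otimes> x) y * \<Phi> g x h) * (\<Phi> h y x * \<Phi> g (h \<otimes> y) x * \<Phi> g h y) * (\<Phi> y x h * \<Phi> g (x \<otimes> y) h * \<Phi> g y x) * (\<Phi> (g \<otimes> y) h x * \<Phi> g y (h \<otimes> x))"
    by (simp only: e0 e1 e2 e3 e4 e5 e6 e7 e8 e9 e10 e11)

  show ?thesis
    unfolding Phi_tilde_def
    apply (subst frac3)
    apply (simp_all add: nz m_comm)
    apply (rule mult_right_cancel[where c="(\<Phi> y g h * \<Phi> x (g \<otimes> y) h * \<Phi> x y g) * (\<Phi> (g \<otimes> x) y h * \<Phi> x g (h \<otimes> y)) * (\<Phi> g h y * \<Phi> x (g \<otimes> h) y * \<Phi> x g h) * (\<Phi> (x \<otimes> y) g h * \<Phi> y x (g \<otimes> h)) * (\<Phi> g x h * \<Phi> y (g \<otimes> x) h * \<Phi> y g x) * (\<Phi> (g \<otimes> y) h x * \<Phi> y g (h \<otimes> x)) * (\<Phi> h x y * \<Phi> g (h \<otimes> x) y * \<Phi> g h x) * (\<Phi> x y h * \<Phi> g (x \<otimes> y) h * \<Phi> g x y) * (\<Phi> (g \<otimes> x) h y * \<Phi> g x (h \<otimes> y)) * (\<Phi> (g \<otimes> h) y x * \<Phi> g h (x \<otimes> y)) * (\<Phi> (g \<otimes> y) x h * \<Phi> g y (h \<otimes> x)) * (\<Phi> y h x * \<Phi> g (h \<otimes> y) x * \<Phi>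 g y h)", THEN iffD1])
    apply (simp add: nz)
    apply (subst (2) XY)
    apply (simp only: cm mult_ac)
    done
qed
end


locale opsetup = vector_space scale for scale :: "'k::field \<Rightarrow> 'v::ab_group_add \<Rightarrow> 'v" +
  fixes U :: "'v set" and L :: "'v \<Rightarrow> 'v"
  assumes U0: "0 \<in> U" and Uadd: "x \<in> U \<Longrightarrow> y \<in> U \<Longrightarrow> x + y \<in> U"
    and Uscale: "x \<in> U \<Longrightarrow> scale c x \<in> U"
    and LU: "x \<in> U \<Longrightarrow> L x \<in> U"
    and Ladd: "x \<in> U \<Longrightarrow> y \<in> U \<Longrightarrow> L (x + y) = L x + L y"
    and Lscale: "x \<in> U \<Longrightarrow> L (scale c x) = scale c (L x)"
begin

definition opp :: "'k poly \<Rightarrow> 'v \<Rightarrow> 'v" where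
  "opp p u = (\<Sum>i\<le>degree p. scale (coeff p i) ((L ^^ i) u))"

lemma Lpow_U: "u \<in> U \<Longrightarrow> (L ^^ i) u \<in> U"
  by (induction i) (auto intro: LU)

lemma Usum: "finite A \<Longrightarrow> (\<And>i. i \<in> A \<Longrightarrow> f i \<in> U) \<Longrightarrow> sum f A \<in> U"
  by (induction A rule: finite_induct) (auto intro: Uadd U0)

lemma L0: "L 0 = 0"
  using Ladd[OF U0 U0] by simp

lemma Lsum: "finite A \<Longrightarrow> (\<And>i. i \<in> A \<Longrightarrow> f i \<in> U) \<Longrightarrow> L (sum f A) = (\<Sum>i\<in>A. L (f i))"
  by (induction A rule: finite_induct) (auto simp: L0 Ladd Usum)

lemma opp_U: "u \<in> U \<Longrightarrow> opp p u \<in> U"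
  unfolding opp_def by (intro Usum) (auto intro: Uscale Lpow_U)

lemma opp_eq: "degree p < n \<Longrightarrow> opp p u = (\<Sum>i<n. scale (coeff p i) ((L ^^ i) u))"
  unfolding opp_def
  by (rule sum.mono_neutral_left) (auto simp: coeff_eq_0)

lemma opp_add: "opp (p + q) u = opp p u + opp q u"
proof -
  define n where "n = Suc (max (degree p) (degree q))"
  have "degree (p + q) < n" using degree_add_le_max[of p q] unfolding n_def by simp
  then show ?thesis
    by (simp add: opp_eq[where n=n] n_def scale_left_distrib sum.distrib del: sum.lessThan_Suc)
qed

lemma opp_smult: "opp (smult c p) u = scale c (opp p u)"
proof -
  define n where "n = Suc (degree p)"
  have "degree (smult c p) < n" using degree_smult_le[of c p] unfolding n_def by simp
  then show ?thesis
    by (simp add: opp_eq[where n=n] n_def scale_sum_right del: sum.lessThan_Suc)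
qed

lemma opp_const: "opp [:c:] u = scale c u"
  by (simp add: opp_def)

lemma opp_pCons0: assumes u: "u \<in> U" shows "opp (pCons 0 q) u = L (opp q u)"
proof -
  define n where "n = Suc (degree q)"
  have d: "degree (pCons 0 q) < Suc n" unfolding n_def by (simp add: degree_pCons_le Suc_le_lessD)
  have "opp (pCons 0 q) u = (\<Sum>i<Suc n. scale (coeff (pCons 0 q) i) ((L ^^ i) u))"
    by (rule opp_eq[OF d])
  also have "\<dots> = (\<Sum>i<n. scale (coeff q i) ((L ^^ Suc i) u))"
    unfolding sum.lessThan_Suc_shift by simp
  also have "\<dots> = (\<Sum>i<n. L (scale (coeff q i) ((L ^^ i) u)))"
    by (simp add: Lscale Lpow_U u)
  also have "\<dots> = L (\<Sum>i<n. scale (coeff q i) ((L ^^ i) u))"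
    by (rule Lsum[symmetric]) (auto intro: Uscale Lpow_U u)
  also have "\<dots> = L (opp q u)" by (simp add: opp_eq[where n=n] n_def del: sum.lessThan_Suc)
  finally show ?thesis .
qed

lemma eigen_poly:
  assumes ac: "alg_closed_field TYPE('k)"
  shows "p \<noteq> 0 \<Longrightarrow> u0 \<in> U \<Longrightarrow> u0 \<noteq> 0 \<Longrightarrow> opp p u0 = 0 \<Longrightarrow> \<exists>u\<in>U. u \<noteq> 0 \<and> (\<exists>c. L u = scale c u)"
proof (induction "degree p" arbitrary: p rule: less_induct)
  case less
  show ?case
  proof (cases "degree p = 0")
    case True
    then obtain c where p: "p = [:c:]" by (metis degree_eq_zeroE)
    with less.prems have "c \<noteq> 0" by auto
    with less.prems show ?thesis by (simp add: p opp_const)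
  next
    case False
    then have "degree p \<ge> 1" by simp
    then obtain r where r: "poly p r = 0" using ac unfolding alg_closed_field_def by blast
    define q where "q = synthetic_div p r"
    have pq: "p + smult r q = pCons 0 q" using synthetic_div_correct[of p r] r by (simp add: q_def)
    have dq: "degree q < degree p" using False by (simp add: q_def degree_synthetic_div)
    have q0: "q \<noteq> 0" using pq less.prems(1) by auto
    define u1 where "u1 = opp q u0"
    have u1U: "u1 \<in> U" using less.prems by (simp add: u1_def opp_U)
    have "opp p u0 + scale r u1 = L u1"
      using arg_cong[OF pq, of "\<lambda>p. opp p u0"] less.prems
      by (simp add: opp_add opp_smult opp_pCons0 u1_def)
    then have Lu1: "L u1 = scale r u1" using less.prems by simp
    show ?thesis
    proof (cases "u1 = 0")
      case True
      then have "opp q u0 = 0" by (simp add: u1_def)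
      then show ?thesis by (rule less.hyps[OF dq q0 less.prems(2,3)])
    next
      case False
      then show ?thesis using u1U Lu1 by blast
    qed
  qed
qed

lemma opp_monom: "u \<in> U \<Longrightarrow> opp (monom 1 n) u = (L ^^ n) u"
proof (induction n)
  case 0 then show ?case by (simp add: opp_def)
next
  case (Suc n) then show ?case by (simp add: monom_Suc opp_pCons0)
qed

lemma eigen_pow:
  assumes ac: "alg_closed_field TYPE('k)" and N: "N \<ge> 1"
    and pw: "\<And>u. u \<in> U \<Longrightarrow> (L ^^ N) u = scale s u"
    and u0: "u0 \<in> U" "u0 \<noteq> 0"
  shows "\<exists>u\<in>U. u \<noteq> 0 \<and> (\<exists>c. L u = scale c u)"
proof -
  define p where "p = pCons (- s) (monom (1::'k) (N - 1))"
  have peq: "p = [:-s:] + pCons 0 (monom 1 (N - 1))" unfolding p_def by simp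
  have "opp p u0 = opp [:-s:] u0 + opp (pCons 0 (monom 1 (N - 1))) u0"
    by (simp only: peq opp_add)
  also have "\<dots> = scale (-s) u0 + L ((L ^^ (N - 1)) u0)"
    using u0 by (simp only: opp_const opp_pCons0 opp_monom)
  also have "L ((L ^^ (N - 1)) u0) = (L ^^ N) u0"
    using N by (metis Suc_diff_le diff_Suc_1 funpow.simps(2) o_apply)
  finally have "opp p u0 = 0" using pw[OF u0(1)] by simp
  moreover have "p \<noteq> 0" unfolding p_def by simp
  ultimately show ?thesis using eigen_poly[OF ac] u0 by blast
qed

end


lemma pow_DirProd:
  assumes "group G" "group H"
  shows "(x, y) [^]\<^bsub>G \<times>\<times> H\<^esub> (k::nat) = (x [^]\<^bsub>G\<^esub> k, y [^]\<^bsub>H\<^esub> k)"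
  by (induction k) auto

lemma gens_from_iso:
  assumes G: "group G" and H: "group H" and psi: "\<psi> \<in> iso H G"
    and c: "c1 \<in> carrier H" "c2 \<in> carrier H"
    and gen: "\<And>h. h \<in> carrier H \<Longrightarrow> \<exists>i j. h = c1 [^]\<^bsub>H\<^esub> (i::nat) \<otimes>\<^bsub>H\<^esub> c2 [^]\<^bsub>H\<^esub> (j::nat)"
  shows "\<exists>a\<in>carrier G. \<exists>b\<in>carrier G. \<forall>e\<in>carrier G. \<exists>i j. e = a [^]\<^bsub>G\<^esub> (i::nat) \<otimes>\<^bsub>G\<^esub> b [^]\<^bsub>G\<^esub> (j::nat)"
proof -
  have hom: "\<psi> \<in> hom H G" and bij: "bij_betw \<psi> (carrier H) (carrier G)"
    using psi unfolding iso_def by auto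
  show ?thesis
  proof (intro bexI ballI)
    fix e assume "e \<in> carrier G"
    then obtain h where h: "h \<in> carrier H" "e = \<psi> h" using bij unfolding bij_betw_def by auto
    obtain i j where ij: "h = c1 [^]\<^bsub>H\<^esub> (i::nat) \<otimes>\<^bsub>H\<^esub> c2 [^]\<^bsub>H\<^esub> (j::nat)" using gen[OF h(1)] by blast
    have "e = \<psi> (c1 [^]\<^bsub>H\<^esub> i) \<otimes>\<^bsub>G\<^esub> \<psi> (c2 [^]\<^bsub>H\<^esub> j)"
      using h ij hom c H by (simp add: hom_mult monoid.nat_pow_closed group.is_monoid)
    also have "\<dots> = \<psi> c1 [^]\<^bsub>G\<^esub> i \<otimes>\<^bsub>G\<^esub> \<psi> c2 [^]\<^bsub>G\<^esub> j"
      using hom c G H by (simp add: hom_nat_pow)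
    finally show "\<exists>i j. e = \<psi> c1 [^]\<^bsub>G\<^esub> (i::nat) \<otimes>\<^bsub>G\<^esub> \<psi> c2 [^]\<^bsub>G\<^esub> (j::nat)" by blast
  qed (use hom c in \<open>auto simp: hom_in_carrier\<close>)
qed

lemma gens:
  assumes G: "group G" and fin: "finite (carrier G)"
    and iso: "(\<exists>n. G \<cong> integer_mod_group n) \<or> (\<exists>m n. G \<cong> integer_mod_group m \<times>\<times> integer_mod_group n)"
  shows "\<exists>a\<in>carrier G. \<exists>b\<in>carrier G. \<forall>e\<in>carrier G. \<exists>i j. e = a [^]\<^bsub>G\<^esub> (i::nat) \<otimes>\<^bsub>G\<^esub> b [^]\<^bsub>G\<^esub> (j::nat)"
  using iso
proof
  assume "\<exists>n. G \<cong> integer_mod_group n"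
  then obtain n where "G \<cong> integer_mod_group n" by blast
  then have "integer_mod_group n \<cong> G" using group.iso_sym[OF G] by blast
  then obtain \<psi> where psi: "\<psi> \<in> iso (integer_mod_group n) G" unfolding is_iso_def by blast
  then have "bij_betw \<psi> (carrier (integer_mod_group n)) (carrier G)" unfolding iso_def by auto
  then have finH: "finite (carrier (integer_mod_group n))" using fin bij_betw_finite by blast
  then have n0: "n \<noteq> 0" by (cases "n = 0") (auto simp: carrier_integer_mod_group infinite_UNIV_int)
  show ?thesis
  proof (rule gens_from_iso[OF G group_integer_mod_group psi])
    show "1 mod int n \<in> carrier (integer_mod_group n)" using n0 by (simp add: carrier_integer_mod_group)
    show "0 \<in> carrier (integer_mod_group n)" by simp
    fix h assume "h \<in> carrier (integer_mod_group n)"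
    then have h: "0 \<le> h" "h < int n" using n0 by (auto simp: carrier_integer_mod_group)
    have "(1 mod int n) [^]\<^bsub>integer_mod_group n\<^esub> (nat h) = (int (nat h) * (1 mod int n)) mod int n"
      by (rule pow_integer_mod_group)
    also have "\<dots> = h" using h by (simp add: mod_mult_right_eq)
    finally have "h = (1 mod int n) [^]\<^bsub>integer_mod_group n\<^esub> (nat h) \<otimes>\<^bsub>integer_mod_group n\<^esub> 0 [^]\<^bsub>integer_mod_group n\<^esub> (0::nat)"
      using h by simp
    then show "\<exists>i j. h = (1 mod int n) [^]\<^bsub>integer_mod_group n\<^esub> (i::nat) \<otimes>\<^bsub>integer_mod_group n\<^esub> 0 [^]\<^bsub>integer_mod_group n\<^esub> (j::nat)"
      by blast
  qed
next
  assume "\<exists>m n. G \<cong> integer_mod_group m \<times>\<times> integer_mod_group n"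
  then obtain m n where "G \<cong> integer_mod_group m \<times>\<times> integer_mod_group n" by blast
  then have "integer_mod_group m \<times>\<times> integer_mod_group n \<cong> G" using group.iso_sym[OF G] by blast
  then obtain \<psi> where psi: "\<psi> \<in> iso (integer_mod_group m \<times>\<times> integer_mod_group n) G" unfolding is_iso_def by blast
  then have "bij_betw \<psi> (carrier (integer_mod_group m \<times>\<times> integer_mod_group n)) (carrier G)" unfolding iso_def by auto
  then have finH: "finite (carrier (integer_mod_group m) \<times> carrier (integer_mod_group n))"
    using fin bij_betw_finite by force
  have "finite (carrier (integer_mod_group m))"
    using finite_cartesian_productD1[OF finH] integer_mod_group_0 by blast
  then have m0: "m \<noteq> 0" by (cases "m = 0") (auto simp: carrier_integer_mod_group infinite_UNIV_int)
  have "finite (carrier (integer_mod_group n))"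
    using finite_cartesian_productD2[OF finH] integer_mod_group_0 by blast
  then have n0: "n \<noteq> 0" by (cases "n = 0") (auto simp: carrier_integer_mod_group infinite_UNIV_int)
  have grH: "group (integer_mod_group m \<times>\<times> integer_mod_group n)"
    by (simp add: DirProd_group)
  show ?thesis
  proof (rule gens_from_iso[OF G grH psi])
    show "(1 mod int m, 0) \<in> carrier (integer_mod_group m \<times>\<times> integer_mod_group n)"
      using m0 by (simp add: carrier_integer_mod_group)
    show "(0, 1 mod int n) \<in> carrier (integer_mod_group m \<times>\<times> integer_mod_group n)"
      using n0 by (simp add: carrier_integer_mod_group)
    fix h assume "h \<in> carrier (integer_mod_group m \<times>\<times> integer_mod_group n)"
    then obtain h1 h2 where hh: "h = (h1, h2)" and h: "0 \<le> h1" "h1 < int m" "0 \<le> h2" "h2 < int n"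
      using m0 n0 by (auto simp: carrier_integer_mod_group)
    have e1: "(1 mod int m) [^]\<^bsub>integer_mod_group m\<^esub> (nat h1) = h1"
      unfolding pow_integer_mod_group using h by (simp add: mod_mult_right_eq)
    have e2: "(1 mod int n) [^]\<^bsub>integer_mod_group n\<^esub> (nat h2) = h2"
      unfolding pow_integer_mod_group using h by (simp add: mod_mult_right_eq)
    have e3: "(0::int) [^]\<^bsub>integer_mod_group n\<^esub> (nat h1) = 0"
      unfolding pow_integer_mod_group by simp
    have e4: "(0::int) [^]\<^bsub>integer_mod_group m\<^esub> (nat h2) = 0"
      unfolding pow_integer_mod_group by simp
    show "\<exists>i j. h = (1 mod int m, 0) [^]\<^bsub>integer_mod_group m \<times>\<times> integer_mod_group n\<^esub> (i::nat) \<otimes>\<^bsub>integer_mod_group m \<times>\<times> integer_mod_group n\<^esub> (0, 1 mod int n) [^]\<^bsub>integer_mod_group m \<times>\<times> integer_mod_group n\<^esub> (j::nat)"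
    proof (intro exI)
      let ?D = "integer_mod_group m \<times>\<times> integer_mod_group n"
      have p1: "(1 mod int m, 0) [^]\<^bsub>?D\<^esub> (nat h1) = (h1, 0)"
        using pow_DirProd[OF group_integer_mod_group group_integer_mod_group, where x="1 mod int m" and y=0 and k="nat h1"] e1 e3 by simp
      have p2: "(0, 1 mod int n) [^]\<^bsub>?D\<^esub> (nat h2) = (0, h2)"
        using pow_DirProd[OF group_integer_mod_group group_integer_mod_group, where x=0 and y="1 mod int n" and k="nat h2"] e2 e4 by simp
      show "h = (1 mod int m, 0) [^]\<^bsub>?D\<^esub> (nat h1) \<otimes>\<^bsub>?D\<^esub> (0, 1 mod int n) [^]\<^bsub>?D\<^esub> (nat h2)"
        unfolding p1 p2 using h by (simp add: hh)
    qed
  qed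
qed

lemma (in comm_group) theta_sym:
  fixes \<Phi> :: "'a \<Rightarrow> 'a \<Rightarrow> 'a \<Rightarrow> 'k::field"
  assumes coc: "normalized_3cocycle G \<Phi>"
    and aG: "a \<in> carrier G" and bG: "b \<in> carrier G"
    and gen: "\<forall>e\<in>carrier G. \<exists>i j. e = a [^] (i::nat) \<otimes> b [^] (j::nat)"
    and gG: "g \<in> carrier G"
  shows "Phi_tilde \<Phi> g a b = Phi_tilde \<Phi> g b a"
proof -
  have nz: "\<And>x y z. x \<in> carrier G \<Longrightarrow> y \<in> carrier G \<Longrightarrow> z \<in> carrier G \<Longrightarrow> \<Phi> x y z \<noteq> 0"
    using coc unfolding normalized_3cocycle_def by blast
  have nzt: "\<And>x y z. x \<in> carrier G \<Longrightarrow> y \<in> carrier G \<Longrightarrow> z \<in> carrier G \<Longrightarrow> Phi_tilde \<Phi> x y z \<noteq> 0"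
    by (simp add: Phi_tilde_def nz)
  let ?S = "\<lambda>g. Phi_tilde \<Phi> g a b = Phi_tilde \<Phi> g b a"
  have step: "?S (g \<otimes> h)" if g: "g \<in> carrier G" and h: "h \<in> carrier G" and Sg: "?S g" and Sh: "?S h" for g h
  proof -
    have eq: "Phi_tilde \<Phi> (g \<otimes> h) a b * Phi_tilde \<Phi> g b a * Phi_tilde \<Phi> h b a
       = Phi_tilde \<Phi> (g \<otimes> h) b a * Phi_tilde \<Phi> g a b * Phi_tilde \<Phi> h a b"
      by (rule theta_mult[OF coc g h aG bG])
    have "Phi_tilde \<Phi> (g \<otimes> h) a b * (Phi_tilde \<Phi> g a b * Phi_tilde \<Phi> h a b)
       = Phi_tilde \<Phi> (g \<otimes> h) b a * (Phi_tilde \<Phi> g a b * Phi_tilde \<Phi> h a b)"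
      using eq Sg Sh by (simp add: mult.assoc)
    moreover have "Phi_tilde \<Phi> g a b * Phi_tilde \<Phi> h a b \<noteq> 0" using nzt g h aG bG by simp
    ultimately show ?thesis by simp
  qed
  have Sa: "?S a" using aG bG by (simp add: Phi_tilde_def nz)
  have Sb: "?S b" using aG bG by (simp add: Phi_tilde_def nz)
  have S1: "?S \<one>" using coc aG bG unfolding normalized_3cocycle_def Phi_tilde_def by simp
  have Sai: "?S (a [^] i)" for i :: nat
  proof (induction i)
    case 0 then show ?case using S1 by simp
  next
    case (Suc i) then show ?case using step[of "a [^] i" a] aG Sa by simp
  qed
  have Sbj: "?S (b [^] j)" for j :: nat
  proof (induction j)
    case 0 then show ?case using S1 by simp
  next
    case (Suc j) then show ?case using step[of "b [^] j" b] bG Sb by simp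
  qed
  obtain i j where "g = a [^] (i::nat) \<otimes> b [^] (j::nat)" using gen gG by blast
  then show ?thesis using step[OF _ _ Sai Sbj] aG bG by simp
qed

theorem proposition3p15:
  fixes G :: "'g monoid" and \<Phi> :: "'g \<Rightarrow> 'g \<Rightarrow> 'g \<Rightarrow> 'k::field_char_0"
  assumes "alg_closed_field TYPE('k)"
    and "comm_group G" and "finite (carrier G)"
    and "(\<exists>n. G \<cong> integer_mod_group n) \<or>
         (\<exists>m n. G \<cong> integer_mod_group m \<times>\<times> integer_mod_group n)"
    and "normalized_3cocycle G \<Phi>"
  shows "abelian_cocycle G \<Phi> TYPE('v::ab_group_add)"
proof -
  note ac = assms(1)
  interpret cg: comm_group G by (rule assms(2))
  obtain a b where aG: "a \<in> carrier G" and bG: "b \<in> carrier G"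
    and gen: "\<forall>e\<in>carrier G. \<exists>i j. e = a [^]\<^bsub>G\<^esub> (i::nat) \<otimes>\<^bsub>G\<^esub> b [^]\<^bsub>G\<^esub> (j::nat)"
    using gens[OF cg.is_group assms(3) assms(4)] by blast
  have sym: "\<And>g. g \<in> carrier G \<Longrightarrow> Phi_tilde \<Phi> g a b = Phi_tilde \<Phi> g b a"
    using cg.theta_sym[OF assms(5) aG bG gen] by blast
  have nz: "\<And>x y z. x \<in> carrier G \<Longrightarrow> y \<in> carrier G \<Longrightarrow> z \<in> carrier G \<Longrightarrow> \<Phi> x y z \<noteq> 0"
    using assms(5) unfolding normalized_3cocycle_def by blast
  have nzt: "\<And>x y z. x \<in> carrier G \<Longrightarrow> y \<in> carrier G \<Longrightarrow> z \<in> carrier G \<Longrightarrow> Phi_tilde \<Phi> x y z \<noteq> 0"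
    by (simp add: Phi_tilde_def nz)
  define N where "N = card (carrier G)"
  have N1: "N \<ge> 1" using assms(3) cg.one_closed unfolding N_def
    by (metis One_nat_def Suc_leI card_gt_0_iff empty_iff)
  have powN1: "\<And>x. x \<in> carrier G \<Longrightarrow> x [^]\<^bsub>G\<^esub> N = \<one>\<^bsub>G\<^esub>"
    unfolding N_def by (rule cg.power_order_eq_one[OF assms(3)])
  show ?thesis unfolding abelian_cocycle_def
  proof (intro allI impI)
    fix scale :: "'k \<Rightarrow> 'v \<Rightarrow> 'v" and V grade act
    assume simple: "yd_simple G \<Phi> scale V grade act"
    then have obj: "yd_object G \<Phi> scale V grade act" and Vne: "V \<noteq> {0}"
      and minimal: "\<And>W. yd_subobject G scale V grade act W \<Longrightarrow> W = {0} \<or> W = V"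
      unfolding yd_simple_def by auto
    note objd = obj[unfolded yd_object_def]
    have vs: "vector_space scale" using objd[THEN conjunct1] .
    interpret vs: vector_space scale by (rule vs)
    have Vsub: "vs.subspace V" using objd[THEN conjunct2, THEN conjunct1] by blast
    have grsub: "\<And>g. g \<in> carrier G \<Longrightarrow> vs.subspace (grade g) \<and> grade g \<subseteq> V"
      using objd[THEN conjunct2, THEN conjunct2, THEN conjunct1] by blast
    have uniq: "\<And>v. v \<in> V \<Longrightarrow> \<exists>!f. (\<forall>g\<in>carrier G. f g \<in> grade g) \<and> (\<forall>g. g \<notin> carrier G \<longrightarrow> f g = 0)
                 \<and> v = (\<Sum>g\<in>carrier G. f g)"
      by (rule bspec[OF objd[THEN conjunct2, THEN conjunct2, THEN conjunct2, THEN conjunct1]])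
    have actadd: "\<And>e x y. e \<in> carrier G \<Longrightarrow> x \<in> V \<Longrightarrow> y \<in> V \<Longrightarrow> act e (x + y) = act e x + act e y"
      using objd[THEN conjunct2, THEN conjunct2, THEN conjunct2, THEN conjunct2, THEN conjunct1] by blast
    have actscale: "\<And>e c x. e \<in> carrier G \<Longrightarrow> x \<in> V \<Longrightarrow> act e (scale c x) = scale c (act e x)"
      using objd[THEN conjunct2, THEN conjunct2, THEN conjunct2, THEN conjunct2, THEN conjunct2, THEN conjunct1] by blast
    have actgr: "\<And>e g v. e \<in> carrier G \<Longrightarrow> g \<in> carrier G \<Longrightarrow> v \<in> grade g \<Longrightarrow> act e v \<in> grade g"
      using objd[THEN conjunct2, THEN conjunct2, THEN conjunct2, THEN conjunct2, THEN conjunct2, THEN conjunct2, THEN conjunct1] by blast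
    have act1: "\<And>v. v \<in> V \<Longrightarrow> act \<one>\<^bsub>G\<^esub> v = v"
      using objd[THEN conjunct2, THEN conjunct2, THEN conjunct2, THEN conjunct2, THEN conjunct2, THEN conjunct2, THEN conjunct2, THEN conjunct1] by blast
    have acttw: "\<And>g e f v. g \<in> carrier G \<Longrightarrow> e \<in> carrier G \<Longrightarrow> f \<in> carrier G \<Longrightarrow> v \<in> grade g \<Longrightarrow>
        act e (act f v) = scale (Phi_tilde \<Phi> g e f) (act (e \<otimes>\<^bsub>G\<^esub> f) v)"
      using objd[THEN conjunct2, THEN conjunct2, THEN conjunct2, THEN conjunct2, THEN conjunct2, THEN conjunct2, THEN conjunct2, THEN conjunct2] by blast
    have sub0: "\<And>S. vs.subspace S \<Longrightarrow> 0 \<in> S" by (simp add: vs.subspace_def)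
    have subadd: "\<And>S x y. vs.subspace S \<Longrightarrow> x \<in> S \<Longrightarrow> y \<in> S \<Longrightarrow> x + y \<in> S" by (simp add: vs.subspace_def)
    have subscale: "\<And>S c x. vs.subspace S \<Longrightarrow> x \<in> S \<Longrightarrow> scale c x \<in> S" by (simp add: vs.subspace_def)
    have decomp: "f h = (if h = g0 then w else 0)"
      if g0: "g0 \<in> carrier G" and w: "w \<in> grade g0" and f: "\<forall>h\<in>carrier G. f h \<in> grade h"
        and fw: "w = (\<Sum>h\<in>carrier G. f h)" and h: "h \<in> carrier G" for g0 w f h
    proof -
      define f' where "f' = (\<lambda>h. if h \<in> carrier G then f h else 0)"
      define f0 where "f0 = (\<lambda>h. if h = g0 then w else 0)"
      have wV: "w \<in> V" using grsub[OF g0] w by blast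
      have P1: "(\<forall>g\<in>carrier G. f' g \<in> grade g) \<and> (\<forall>g. g \<notin> carrier G \<longrightarrow> f' g = 0)
                 \<and> w = (\<Sum>g\<in>carrier G. f' g)"
        using f fw by (simp add: f'_def)
      have P2: "(\<forall>g\<in>carrier G. f0 g \<in> grade g) \<and> (\<forall>g. g \<notin> carrier G \<longrightarrow> f0 g = 0)
                 \<and> w = (\<Sum>g\<in>carrier G. f0 g)"
        using g0 w assms(3) grsub sub0 by (auto simp: f0_def)
      have "f' = f0" using uniq[OF wV] P1 P2 by blast
      then show ?thesis using h by (metis f'_def f0_def)
    qed
    obtain w where wV: "w \<in> V" and w0: "w \<noteq> 0" using Vne sub0[OF Vsub] by blast
    obtain f where f: "\<forall>g\<in>carrier G. f g \<in> grade g" and fw: "w = (\<Sum>g\<in>carrier G. f g)"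
      using uniq[OF wV] by blast
    obtain g where gG: "g \<in> carrier G" and fg: "f g \<noteq> 0"
    proof -
      have "\<not> (\<forall>g\<in>carrier G. f g = 0)" using fw w0 by (metis sum.neutral)
      then show ?thesis using that by blast
    qed
    have "yd_subobject G scale V grade act (grade g)"
      unfolding yd_subobject_def
    proof (intro conjI ballI allI impI)
      show "vs.subspace (grade g)" using grsub[OF gG] by blast
      show "grade g \<subseteq> V" using grsub[OF gG] by blast
      fix w' g' f'
      assume w': "w' \<in> grade g" and g': "g' \<in> carrier G"
        and f': "(\<forall>h\<in>carrier G. f' h \<in> grade h) \<and> w' = (\<Sum>h\<in>carrier G. f' h)"
      then have "f' g' = (if g' = g then w' else 0)" using decomp[OF gG w'] by blast
      then show "f' g' \<in> grade g" using w' sub0 grsub[OF gG] by auto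
    next
      fix e w' assume "e \<in> carrier G" "w' \<in> grade g"
      then show "act e w' \<in> grade g" using actgr gG by blast
    qed
    then have "grade g = {0} \<or> grade g = V" by (rule minimal)
    moreover have "f g \<in> grade g" using f gG by blast
    ultimately have Vg: "grade g = V" using fg by auto
    have twist: "\<And>e f v. e \<in> carrier G \<Longrightarrow> f \<in> carrier G \<Longrightarrow> v \<in> V \<Longrightarrow>
        act e (act f v) = scale (Phi_tilde \<Phi> g e f) (act (e \<otimes>\<^bsub>G\<^esub> f) v)"
      using acttw[OF gG] Vg by blast
    have actV: "\<And>e v. e \<in> carrier G \<Longrightarrow> v \<in> V \<Longrightarrow> act e v \<in> V"
      using actgr[OF _ gG] Vg by blast
    have act0: "\<And>e. e \<in> carrier G \<Longrightarrow> act e 0 = 0"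
      using actadd[OF _ sub0[OF Vsub] sub0[OF Vsub]] by simp
    have powrel: "\<exists>c. \<forall>u\<in>V. (act x ^^ i) u = scale c (act (x [^]\<^bsub>G\<^esub> i) u)"
      if xG: "x \<in> carrier G" for x i
    proof (induction i)
      case 0 then show ?case using act1 by (intro exI[of _ 1]) simp
    next
      case (Suc i)
      then obtain c where c: "\<forall>u\<in>V. (act x ^^ i) u = scale c (act (x [^]\<^bsub>G\<^esub> i) u)" by blast
      have "(act x ^^ Suc i) u = scale (c * Phi_tilde \<Phi> g x (x [^]\<^bsub>G\<^esub> i)) (act (x [^]\<^bsub>G\<^esub> Suc i) u)"
        if u: "u \<in> V" for u
      proof -
        have "(act x ^^ Suc i) u = act x (scale c (act (x [^]\<^bsub>G\<^esub> i) u))" using c u by simp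
        also have "\<dots> = scale c (act x (act (x [^]\<^bsub>G\<^esub> i) u))"
          using actscale xG actV u cg.nat_pow_closed by blast
        also have "\<dots> = scale c (scale (Phi_tilde \<Phi> g x (x [^]\<^bsub>G\<^esub> i)) (act (x \<otimes>\<^bsub>G\<^esub> x [^]\<^bsub>G\<^esub> i) u))"
          using twist xG u cg.nat_pow_closed by simp
        also have "x \<otimes>\<^bsub>G\<^esub> x [^]\<^bsub>G\<^esub> i = x [^]\<^bsub>G\<^esub> Suc i"
          using xG by (simp add: cg.m_comm)
        finally show ?thesis by simp
      qed
      then show ?case by blast
    qed
    have powN: "\<exists>s. \<forall>u\<in>V. (act x ^^ N) u = scale s u" if xG: "x \<in> carrier G" for x
      using powrel[OF xG, of N] powN1[OF xG] act1 by auto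
    have op1: "opsetup scale V (act a)"
      unfolding opsetup_def opsetup_axioms_def
      using vs Vsub aG actV actadd actscale by (simp add: vs.subspace_def)
    obtain s1 where s1: "\<forall>u\<in>V. (act a ^^ N) u = scale s1 u" using powN[OF aG] by blast
    obtain u1 lam where u1: "u1 \<in> V" "u1 \<noteq> 0" and lam: "act a u1 = scale lam u1"
      using opsetup.eigen_pow[OF op1 ac N1, of s1 w] s1 wV w0 by blast
    define E where "E = {u \<in> V. act a u = scale lam u}"
    have comm: "act a (act b u) = act b (act a u)" if u: "u \<in> V" for u
    proof -
      have "act a (act b u) = scale (Phi_tilde \<Phi> g a b) (act (a \<otimes>\<^bsub>G\<^esub> b) u)" using twist aG bG u by blast
      also have "\<dots> = scale (Phi_tilde \<Phi> g b a) (act (b \<otimes>\<^bsub>G\<^esub> a) u)"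
        using sym[OF gG] cg.m_comm[OF aG bG] by simp
      also have "\<dots> = act b (act a u)" using twist aG bG u by simp
      finally show ?thesis .
    qed
    have op2: "opsetup scale E (act b)"
      unfolding opsetup_def opsetup_axioms_def
    proof (intro conjI vs allI impI)
      show "0 \<in> E" unfolding E_def using sub0[OF Vsub] act0[OF aG] by simp
      fix x y c
      show "x \<in> E \<Longrightarrow> y \<in> E \<Longrightarrow> x + y \<in> E"
        unfolding E_def using subadd[OF Vsub] actadd[OF aG] by (auto simp: vs.scale_right_distrib)
      show "x \<in> E \<Longrightarrow> scale c x \<in> E"
        unfolding E_def using subscale[OF Vsub] actscale[OF aG] by (auto simp: vs.scale_left_commute)
      show "x \<in> E \<Longrightarrow> act b x \<in> E"
        unfolding E_def using actV[OF bG] comm actscale[OF bG] by auto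
      show "x \<in> E \<Longrightarrow> y \<in> E \<Longrightarrow> act b (x + y) = act b x + act b y"
        unfolding E_def using actadd[OF bG] by auto
      show "x \<in> E \<Longrightarrow> act b (scale c x) = scale c (act b x)"
        unfolding E_def using actscale[OF bG] by auto
    qed
    obtain s2 where s2: "\<forall>u\<in>V. (act b ^^ N) u = scale s2 u" using powN[OF bG] by blast
    have u1E: "u1 \<in> E" unfolding E_def using u1 lam by simp
    obtain u mu where uE: "u \<in> E" and u0: "u \<noteq> 0" and mu: "act b u = scale mu u"
      using opsetup.eigen_pow[OF op2 ac N1, of s2 u1] s2 u1E u1(2) unfolding E_def by blast
    have uV: "u \<in> V" and lu: "act a u = scale lam u" using uE unfolding E_def by auto
    have lstep: "\<exists>c'. act (y \<otimes>\<^bsub>G\<^esub> x) u = scale c' u"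
      if yG: "y \<in> carrier G" and xG: "x \<in> carrier G" and dy: "act y u = scale d u"
        and cx: "act x u = scale c u" for x y c d
    proof -
      have "act y (act x u) = scale (Phi_tilde \<Phi> g y x) (act (y \<otimes>\<^bsub>G\<^esub> x) u)"
        using twist yG xG uV by blast
      then have "act (y \<otimes>\<^bsub>G\<^esub> x) u = scale (inverse (Phi_tilde \<Phi> g y x)) (act y (act x u))"
        using nzt[OF gG yG xG] by simp
      also have "\<dots> = scale (inverse (Phi_tilde \<Phi> g y x) * c * d) u"
        using cx dy actscale yG uV by simp
      finally show ?thesis by blast
    qed
    have lb: "\<exists>c. act (b [^]\<^bsub>G\<^esub> j) u = scale c u" for j :: nat
    proof (induction j)
      case 0 then show ?case using act1 uV by (intro exI[of _ 1]) simp
    next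
      case (Suc j)
      then obtain c where "act (b [^]\<^bsub>G\<^esub> j) u = scale c u" by blast
      then have "\<exists>c'. act (b \<otimes>\<^bsub>G\<^esub> b [^]\<^bsub>G\<^esub> j) u = scale c' u"
        using lstep[OF bG _ mu] bG by blast
      then show ?case using bG by (simp add: cg.m_comm)
    qed
    have lab: "\<exists>c. act (a [^]\<^bsub>G\<^esub> i \<otimes>\<^bsub>G\<^esub> b [^]\<^bsub>G\<^esub> j) u = scale c u" for i j :: nat
    proof (induction i)
      case 0 then show ?case using lb bG by simp
    next
      case (Suc i)
      then obtain c where "act (a [^]\<^bsub>G\<^esub> i \<otimes>\<^bsub>G\<^esub> b [^]\<^bsub>G\<^esub> j) u = scale c u" by blast
      then have "\<exists>c'. act (a \<otimes>\<^bsub>G\<^esub> (a [^]\<^bsub>G\<^esub> i \<otimes>\<^bsub>G\<^esub> b [^]\<^bsub>G\<^esub> j)) u = scale c' u"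
        using lstep[OF aG _ lu] aG bG by blast
      moreover have "a [^]\<^bsub>G\<^esub> Suc i \<otimes>\<^bsub>G\<^esub> b [^]\<^bsub>G\<^esub> j = a \<otimes>\<^bsub>G\<^esub> (a [^]\<^bsub>G\<^esub> i \<otimes>\<^bsub>G\<^esub> b [^]\<^bsub>G\<^esub> j)"
        using aG bG by (simp add: cg.m_assoc cg.m_lcomm)
      ultimately show ?case by simp
    qed
    have line: "\<exists>c. act e u = scale c u" if eG: "e \<in> carrier G" for e
    proof -
      obtain i j where "e = a [^]\<^bsub>G\<^esub> (i::nat) \<otimes>\<^bsub>G\<^esub> b [^]\<^bsub>G\<^esub> (j::nat)"
        using gen eG by blast
      then show ?thesis using lab[of i j] by simp
    qed
    define W where "W = {scale c u | c. True}"
    have WV: "W \<subseteq> V" unfolding W_def using subscale[OF Vsub] uV by blast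
    have "yd_subobject G scale V grade act W"
      unfolding yd_subobject_def
    proof (intro conjI ballI allI impI)
      show "vs.subspace W" unfolding vs.subspace_def W_def
      proof (intro conjI ballI allI)
        show "0 \<in> {scale c u |c. True}" by (rule CollectI, rule exI[of _ 0]) simp
      next
        fix x y assume "x \<in> {scale c u |c. True}" "y \<in> {scale c u |c. True}"
        then obtain c d where "x = scale c u" "y = scale d u" by blast
        then show "x + y \<in> {scale c u |c. True}" by (auto simp: vs.scale_left_distrib[symmetric])
      next
        fix c x assume "x \<in> {scale c u |c. True}"
        then obtain d where "x = scale d u" by blast
        then show "scale c x \<in> {scale c u |c. True}" by auto
      qed
      show "W \<subseteq> V" by (rule WV)
      fix w' g' f'
      assume w': "w' \<in> W" and g': "g' \<in> carrier G"
        and f': "(\<forall>h\<in>carrier G. f' h \<in> grade h) \<and> w' = (\<Sum>h\<in>carrier G. f' h)"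
      have "w' \<in> grade g" using w' WV Vg by blast
      then have "f' g' = (if g' = g then w' else 0)" using decomp[OF gG _ _ _ g'] f' by blast
      moreover have "0 \<in> W" unfolding W_def by (rule CollectI, rule exI[of _ 0]) simp
      ultimately show "f' g' \<in> W" using w' by auto
    next
      fix e w' assume eG: "e \<in> carrier G" and "w' \<in> W"
      then obtain c where c: "w' = scale c u" unfolding W_def by blast
      obtain d where "act e u = scale d u" using line[OF eG] by blast
      then have "act e w' = scale (c * d) u" using c actscale eG uV by simp
      then show "act e w' \<in> W" unfolding W_def by blast
    qed
    then have "W = {0} \<or> W = V" by (rule minimal)
    moreover have "u \<in> W" unfolding W_def by (rule CollectI, rule exI[of _ 1]) simp
    ultimately have "W = V" using u0 by auto
    then show "\<exists>v\<in>V. v \<noteq> 0 \<and> V = {scale c v |c. True}" using uV u0 W_def by blast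
  qed
qed

end
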